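(* Fix $i\in\{1,\dots,k\}$ and $\hat a\in[2^n]$. Let $\mathcal{M}(\hat a)=\{m\in\mathcal{M}^{\text{good}}:a_i(m)=\hat a\}$, and suppose $|\{b_i(m):m\in\mathcal{M}(\hat a)\}|=L$. Then there exist $(L-1)\,|\mathcal{M}(\hat a)|$ distinct elements of $\mathcal{B}^{\text{err}}$, each of which the decoder of terminal $t$ maps to some message in $\mathcal{M}(\hat a)$.
   Context: Setting. $\mathcal{N}$ is a directed network containing nodes $s_1,\dots,s_k,t_1,\dots,t_k$. The network $\mathcal{G}$ is obtained from $\mathcal{N}$ by adding new nodes $s,t,A_1,\dots,A_k,B_1,\dots,B_k$ and, for each $i$, the unit-capacity edges $a_i=(s,A_i)$, two parallel edges $x_i,y_i$ from $A_i$ to $B_i$, $z_i=(A_i,s_i)$, $z'_i=(t_i,B_i)$, and $b_i=(B_i,t)$; the incoming edges of $t$ are exactly $b_1,\dots,b_k$. Admissible error patterns $\boldsymbol r=(r_e)$ are those in which at most one edge $e$ has $r_e\neq0$, with $e\notin\{a_1,\dots,a_k,b_1,\dots,b_k\}$. The output of an edge is its input XOR $r_e$. Let $\mathcal{C}$ be a length-$n$ network code on $\mathcal{G}$. The source $s$ has message $m\in[2^{kn}]$, where $[N]=\{1,\dots,N\}$. An edge $e=(u,v)$ of capacity $c_e$ carries a value in $[2^{nc_e}]$ computed from the signals on the incoming edges of $u$ (and from $m$ if $u=s$). The terminal $t$ has a decoder mapping each tuple in $[2^n]^k$ received on $(b_1,\dots,b_k)$ to a message. For an edge $e$, $e(m,\boldsymbol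 r)$ is the signal received on $e$ under message $m$ and error pattern $\boldsymbol r$, and $e(m)=e(m,\boldsymbol 0)$. Write $\boldsymbol b(m)=(b_1(m),\dots,b_k(m))$. Let $\mathcal{M}^{\text{good}}$ be the set of messages $m$ such that $t$ decodes to $m$ under every admissible error pattern when $m$ is sent. Let $\mathcal{B}^{\text{good}}=\{\boldsymbol b(m):m\in\mathcal{M}^{\text{good}}\}$ and $\mathcal{B}^{\text{err}}=[2^n]^k\setminus\mathcal{B}^{\text{good}}$. *)

theory Defs
  imports Main
begin

record ('v, 'e) net =
  edgesN :: "'e set"
  tailN  :: "'e \<Rightarrow> 'v"
  headN  :: "'e \<Rightarrow> 'v"
  capN   :: "'e \<Rightarrow> nat"
  srcs   :: "nat \<Rightarrow> 'v"
  sinks  :: "nat \<Rightarrow> 'v"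

definition net_ok :: "('v, 'e) net \<Rightarrow> bool" where
  "net_ok N \<longleftrightarrow> finite (edgesN N) \<and>
     acyclic {(tailN N e, headN N e) | e. e \<in> edgesN N}"

datatype 'v gnode = NN 'v | Src | Tgt | ANode nat | BNode nat
datatype 'e gedge = NE 'e | Ea nat | Ex nat | Ey nat | Ez nat | Ez' nat | Eb nat

fun gtail :: "('v, 'e) net \<Rightarrow> 'e gedge \<Rightarrow> 'v gnode" where
  "gtail N (NE e) = NN (tailN N e)"
| "gtail N (Ea i) = Src"
| "gtail N (Ex i) = ANode i"
| "gtail N (Ey i) = ANode i"
| "gtail N (Ez i) = ANode i"
| "gtail N (Ez' i) = NN (sinks N i)"
| "gtail N (Eb i) = BNode i"

fun ghead :: "('v, 'e) net \<Rightarrow> 'e gedge \<Rightarrow> 'v gnode" where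
  "ghead N (NE e) = NN (headN N e)"
| "ghead N (Ea i) = ANode i"
| "ghead N (Ex i) = BNode i"
| "ghead N (Ey i) = BNode i"
| "ghead N (Ez i) = NN (srcs N i)"
| "ghead N (Ez' i) = BNode i"
| "ghead N (Eb i) = Tgt"

fun gcap :: "('v, 'e) net \<Rightarrow> 'e gedge \<Rightarrow> nat" where
  "gcap N (NE e) = capN N e"
| "gcap N (Ea i) = 1"
| "gcap N (Ex i) = 1"
| "gcap N (Ey i) = 1"
| "gcap N (Ez i) = 1"
| "gcap N (Ez' i) = 1"
| "gcap N (Eb i) = 1"

definition gedges :: "('v, 'e) net \<Rightarrow> nat \<Rightarrow> 'e gedge set" where
  "gedges N k = NE ` edgesN N \<union>
     (\<Union>i\<in>{1..k}. {Ea i, Ex i, Ey i, Ez i, Ez' i, Eb i})"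

definition in_edges :: "('v, 'e) net \<Rightarrow> nat \<Rightarrow> 'v gnode \<Rightarrow> 'e gedge set" where
  "in_edges N k u = {e \<in> gedges N k. ghead N e = u}"

text \<open>Messages: [2^(kn)] = {1..2^(kn)}. Edge signals of capacity c are bit strings
  of length n*c, represented as naturals in {0..<2^(n*c)} (so XOR makes sense).\<close>
definition messages :: "nat \<Rightarrow> nat \<Rightarrow> nat set" where
  "messages k n = {1..2^(k*n)}"

definition tuples :: "nat \<Rightarrow> nat \<Rightarrow> nat list set" where
  "tuples k n = {v. length v = k \<and> (\<forall>x\<in>set v. x < 2^n)}"

text \<open>A network code: the local encoding function of each edge (from the message
  and the signals on all edges, of which only the incoming edges of the tail are
  used, and the message only at the source), and the decoder at t.\<close>
record 'e code =
  enc :: "'e gedge \<Rightarrow> nat \<Rightarrow> ('e gedge \<Rightarrow> nat) \<Rightarrow> nat"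
  dec :: "nat list \<Rightarrow> nat"

definition is_code :: "('v, 'e) net \<Rightarrow> nat \<Rightarrow> nat \<Rightarrow> 'e code \<Rightarrow> bool" where
  "is_code N k n C \<longleftrightarrow>
     (\<forall>e\<in>gedges N k. \<forall>m \<sigma>. enc C e m \<sigma> < 2^(n * gcap N e)) \<and>
     (\<forall>e\<in>gedges N k. \<forall>m m' \<sigma> \<sigma>'.
        (\<forall>e'\<in>in_edges N k (gtail N e). \<sigma> e' = \<sigma>' e') \<and> (gtail N e \<noteq> Src \<or> m = m')
        \<longrightarrow> enc C e m \<sigma> = enc C e m' \<sigma>') \<and>
     (\<forall>v\<in>tuples k n. dec C v \<in> messages k n)"

definition consistent :: "('v, 'e) net \<Rightarrow> nat \<Rightarrow> 'e code \<Rightarrow> nat \<Rightarrow> ('e gedge \<Rightarrow> nat)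
    \<Rightarrow> ('e gedge \<Rightarrow> nat) \<Rightarrow> bool" where
  "consistent N k C m r \<sigma> \<longleftrightarrow>
     (\<forall>e\<in>gedges N k. \<sigma> e = xor (enc C e m \<sigma>) (r e)) \<and>
     (\<forall>e. e \<notin> gedges N k \<longrightarrow> \<sigma> e = 0)"

definition signal :: "('v, 'e) net \<Rightarrow> nat \<Rightarrow> 'e code \<Rightarrow> nat \<Rightarrow> ('e gedge \<Rightarrow> nat)
    \<Rightarrow> 'e gedge \<Rightarrow> nat" where
  "signal N k C m r = (THE \<sigma>. consistent N k C m r \<sigma>)"

definition admissible :: "('v, 'e) net \<Rightarrow> nat \<Rightarrow> nat \<Rightarrow> ('e gedge \<Rightarrow> nat) \<Rightarrow> bool" where
  "admissible N k n r \<longleftrightarrow>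
     (\<forall>e. r e < 2^(n * gcap N e)) \<and>
     (\<forall>e. r e \<noteq> 0 \<longrightarrow> e \<in> gedges N k \<and> (\<forall>i. e \<noteq> Ea i \<and> e \<noteq> Eb i)) \<and>
     (\<exists>e0. \<forall>e. r e \<noteq> 0 \<longrightarrow> e = e0)"

definition bvec :: "('v, 'e) net \<Rightarrow> nat \<Rightarrow> 'e code \<Rightarrow> nat \<Rightarrow> ('e gedge \<Rightarrow> nat) \<Rightarrow> nat list" where
  "bvec N k C m r = map (\<lambda>i. signal N k C m r (Eb i)) [1..<Suc k]"

definition Mgood :: "('v, 'e) net \<Rightarrow> nat \<Rightarrow> nat \<Rightarrow> 'e code \<Rightarrow> nat set" where
  "Mgood N k n C = {m \<in> messages k n.
      \<forall>r. admissible N k n r \<longrightarrow> dec C (bvec N k C m r) = m}"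

definition Bgood :: "('v, 'e) net \<Rightarrow> nat \<Rightarrow> nat \<Rightarrow> 'e code \<Rightarrow> nat list set" where
  "Bgood N k n C = (\<lambda>m. bvec N k C m (\<lambda>_. 0)) ` Mgood N k n C"

definition Berr :: "('v, 'e) net \<Rightarrow> nat \<Rightarrow> nat \<Rightarrow> 'e code \<Rightarrow> nat list set" where
  "Berr N k n C = tuples k n - Bgood N k n C"

end

theory Submission imports Defs begin

lemma xor_lt: "(a::nat) < 2^n \<Longrightarrow> b < 2^n \<Longrightarrow> xor a b < 2^n"
proof -
  assume "a < 2^n" "b < 2^n"
  hence "take_bit n a = a" "take_bit n b = b" by (simp_all add: take_bit_nat_eq_self_iff)
  hence "xor a b = take_bit n (xor a b)" by simp
  thus ?thesis by (metis take_bit_nat_less_exp)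
qed

fun lev :: "'v gnode \<Rightarrow> nat" where
  "lev Src = 0" | "lev (ANode _) = 1" | "lev (NN _) = 2" | "lev (BNode _) = 3" | "lev Tgt = 4"
fun nv :: "'v gnode \<Rightarrow> 'v" where
  "nv (NN v) = v" | "nv _ = undefined"

definition Rel :: "('v, 'e) net \<Rightarrow> nat \<Rightarrow> ('e gedge \<times> 'e gedge) set" where
  "Rel N k = {(e1,e2). e1 \<in> gedges N k \<and> ghead N e1 = gtail N e2}"

lemma wf_Rel: assumes "net_ok N" shows "wf (Rel N k)"
proof -
  let ?EN = "{(tailN N e, headN N e) | e. e \<in> edgesN N}"
  have "finite ?EN" using assms unfolding net_ok_def by auto
  hence wfEN: "wf ?EN" using assms finite_acyclic_wf unfolding net_ok_def by blast
  have key: "((lev (gtail N e), nv (gtail N e)), (lev (ghead N e), nv (ghead N e))) \<in> less_than <*lex*> ?EN"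
    if "e \<in> gedges N k" for e
    using that by (cases e) (auto simp: gedges_def)
  have "Rel N k \<subseteq> inv_image (less_than <*lex*> ?EN) (\<lambda>e. (lev (gtail N e), nv (gtail N e)))"
  proof
    fix p assume "p \<in> Rel N k"
    then obtain a b where p: "p = (a,b)" "a \<in> gedges N k" "ghead N a = gtail N b" unfolding Rel_def by auto
    show "p \<in> inv_image (less_than <*lex*> ?EN) (\<lambda>e. (lev (gtail N e), nv (gtail N e)))"
      using key[OF p(2)] p(1,3) by simp
  qed
  moreover have "wf (inv_image (less_than <*lex*> ?EN) (\<lambda>e. (lev (gtail N e), nv (gtail N e))))"
    using wfEN by (intro wf_inv_image wf_lex_prod wf_less_than)
  ultimately show ?thesis using wf_subset by blast
qed

lemma in_edges_Rel: "e' \<in> in_edges N k (gtail N e) \<longleftrightarrow> (e', e) \<in> Rel N k"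
  unfolding in_edges_def Rel_def by auto

lemma consistent_ex:
  assumes "net_ok N" "is_code N k n C"
  shows "\<exists>\<sigma>. consistent N k C m r \<sigma>"
proof -
  define F where "F = (\<lambda>f e. if e \<in> gedges N k then xor (enc C e m f) (r e) else (0::nat))"
  define \<sigma> where "\<sigma> = wfrec (Rel N k) F"
  have wf: "wf (Rel N k)" using wf_Rel assms(1) .
  have eq: "\<sigma> e = F (cut \<sigma> (Rel N k) e) e" for e
    unfolding \<sigma>_def by (rule wfrec[OF wf])
  have "consistent N k C m r \<sigma>"
    unfolding consistent_def
  proof (intro conjI allI ballI impI)
    fix e assume e: "e \<in> gedges N k"
    have "enc C e m (cut \<sigma> (Rel N k) e) = enc C e m \<sigma>"
      using assms(2) e unfolding is_code_def
      by (metis cut_apply in_edges_Rel)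
    thus "\<sigma> e = xor (enc C e m \<sigma>) (r e)" using eq[of e] e unfolding F_def by simp
  next
    fix e assume "e \<notin> gedges N k" thus "\<sigma> e = 0" using eq[of e] unfolding F_def by simp
  qed
  thus ?thesis by blast
qed

lemma consistent_uniq:
  assumes "net_ok N" "is_code N k n C" "consistent N k C m r \<sigma>1" "consistent N k C m r \<sigma>2"
  shows "\<sigma>1 = \<sigma>2"
proof
  fix e
  show "\<sigma>1 e = \<sigma>2 e"
    using wf_Rel[OF assms(1)]
  proof (induction e rule: wf_induct_rule[where r="Rel N k"])
    case (less e)
    show ?case
    proof (cases "e \<in> gedges N k")
      case True
      have "enc C e m \<sigma>1 = enc C e m \<sigma>2"
        using assms(2) True less unfolding is_code_def by (metis in_edges_Rel)
      thus ?thesis using assms(3,4) True unfolding consistent_def by simp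
    next
      case False thus ?thesis using assms(3,4) unfolding consistent_def by simp
    qed
  qed
qed

lemma signal_consistent:
  assumes "net_ok N" "is_code N k n C"
  shows "consistent N k C m r (signal N k C m r)"
proof -
  obtain \<sigma> where s: "consistent N k C m r \<sigma>" using consistent_ex[OF assms] by blast
  show ?thesis unfolding signal_def
    by (rule theI[where P="consistent N k C m r", OF s]) (use consistent_uniq[OF assms s] in blast)
qed

lemma signal_eq:
  assumes "net_ok N" "is_code N k n C" "consistent N k C m r \<sigma>"
  shows "signal N k C m r = \<sigma>"
  using consistent_uniq[OF assms(1,2) signal_consistent[OF assms(1,2)] assms(3)] .


lemma cons_eq: "consistent N k C m r \<sigma> \<Longrightarrow> e \<in> gedges N k \<Longrightarrow> \<sigma> e = xor (enc C e m \<sigma>) (r e)"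
  unfolding consistent_def by blast
lemma cons_eq0: "consistent N k C m (\<lambda>_. 0) \<sigma> \<Longrightarrow> e \<in> gedges N k \<Longrightarrow> \<sigma> e = enc C e m \<sigma>"
  using cons_eq[of N k C m "\<lambda>_. 0" \<sigma> e] by simp
lemma cons_out: "consistent N k C m r \<sigma> \<Longrightarrow> e \<notin> gedges N k \<Longrightarrow> \<sigma> e = 0"
  unfolding consistent_def by blast

lemma enc_local:
  assumes "is_code N k n C" "e \<in> gedges N k" "\<forall>e'\<in>in_edges N k (gtail N e). \<sigma> e' = \<sigma>' e'"
    "gtail N e \<noteq> Src \<or> m = m'"
  shows "enc C e m \<sigma> = enc C e m' \<sigma>'"
  using assms unfolding is_code_def by blast

lemma sig_bound:
  assumes "net_ok N" "is_code N k n C" "admissible N k n r" "e \<in> gedges N k"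
  shows "signal N k C m r e < 2^(n * gcap N e)"
proof -
  have eq: "signal N k C m r e = xor (enc C e m (signal N k C m r)) (r e)"
    using signal_consistent[OF assms(1,2)] assms(4) unfolding consistent_def by blast
  have b1: "enc C e m (signal N k C m r) < 2^(n * gcap N e)"
    using assms(2,4) unfolding is_code_def by blast
  have b2: "r e < 2^(n * gcap N e)" using assms(3) unfolding admissible_def by blast
  show ?thesis unfolding eq by (rule xor_lt[OF b1 b2])
qed

lemma bvec_len: "length (bvec N k C m r) = k" unfolding bvec_def by simp

lemma bvec_nth: "i \<in> {1..k} \<Longrightarrow> bvec N k C m r ! (i - 1) = signal N k C m r (Eb i)"
proof -
  assume i: "i \<in> {1..k}"
  hence l: "i - 1 < length [1..<Suc k]" by auto
  have "[1..<Suc k] ! (i - 1) = i" using i by (simp add: nth_upt del: upt_Suc)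
  thus ?thesis unfolding bvec_def using nth_map[OF l] by (simp del: upt_Suc)
qed

lemma adm0: "admissible N k n (\<lambda>_. 0)" unfolding admissible_def by auto

lemma Eb_in: "i \<in> {1..k} \<Longrightarrow> Eb i \<in> gedges N k" unfolding gedges_def by auto
lemma Ez'_in: "i \<in> {1..k} \<Longrightarrow> Ez' i \<in> gedges N k" unfolding gedges_def by auto
lemma Ex_in: "i \<in> {1..k} \<Longrightarrow> Ex i \<in> gedges N k" unfolding gedges_def by auto
lemma Ey_in: "i \<in> {1..k} \<Longrightarrow> Ey i \<in> gedges N k" unfolding gedges_def by auto
lemma Ea_in: "i \<in> {1..k} \<Longrightarrow> Ea i \<in> gedges N k" unfolding gedges_def by auto

lemma sig0: assumes "net_ok N" "is_code N k n C" "e \<in> gedges N k"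
  shows "signal N k C m (\<lambda>_. 0) e = enc C e m (signal N k C m (\<lambda>_. 0))"
  using cons_eq0[OF signal_consistent[OF assms(1,2)] assms(3)] .

lemma AB_same:
  assumes "net_ok N" "is_code N k n C" "i \<in> {1..k}"
    and "signal N k C m (\<lambda>_. 0) (Ea i) = signal N k C m' (\<lambda>_. 0) (Ea i)"
    and "e = Ex i \<or> e = Ey i"
  shows "signal N k C m (\<lambda>_. 0) e = signal N k C m' (\<lambda>_. 0) e"
proof -
  have ein: "e \<in> gedges N k" using assms(3,5) Ex_in Ey_in by blast
  have ie: "in_edges N k (gtail N e) = {Ea i}"
    using assms(3,5) unfolding in_edges_def gedges_def by auto
  have "enc C e m (signal N k C m (\<lambda>_. 0)) = enc C e m' (signal N k C m' (\<lambda>_. 0))"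
  proof (rule enc_local[OF assms(2) ein])
    show "\<forall>e'\<in>in_edges N k (gtail N e). signal N k C m (\<lambda>_. 0) e' = signal N k C m' (\<lambda>_. 0) e'"
      using ie assms(4) by simp
    show "gtail N e \<noteq> Src \<or> m = m'" using assms(5) by auto
  qed
  thus ?thesis using sig0[OF assms(1,2) ein, of m] sig0[OF assms(1,2) ein, of m'] by argo
qed

lemma swap:
  assumes "net_ok N" "is_code N k n C" "i \<in> {1..k}"
    and "signal N k C m (\<lambda>_. 0) (Ea i) = signal N k C m' (\<lambda>_. 0) (Ea i)"
  defines "\<sigma> \<equiv> signal N k C m (\<lambda>_. 0)" and "\<sigma>' \<equiv> signal N k C m' (\<lambda>_. 0)"
  defines "r \<equiv> (\<lambda>_. 0)(Ez' i := xor (\<sigma> (Ez' i)) (\<sigma>' (Ez' i)))"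
  shows "admissible N k n r \<and> signal N k C m r = \<sigma>(Ez' i := \<sigma>' (Ez' i), Eb i := \<sigma>' (Eb i))"
proof
  have b1: "\<sigma> (Ez' i) < 2^n" unfolding \<sigma>_def using sig_bound[OF assms(1,2) adm0 Ez'_in[OF assms(3)]] by simp
  have b2: "\<sigma>' (Ez' i) < 2^n" unfolding \<sigma>'_def using sig_bound[OF assms(1,2) adm0 Ez'_in[OF assms(3)]] by simp
  show "admissible N k n r"
    unfolding admissible_def r_def using xor_lt[OF b1 b2] Ez'_in[OF assms(3)] by auto
  let ?\<tau> = "\<sigma>(Ez' i := \<sigma>' (Ez' i), Eb i := \<sigma>' (Eb i))"
  have cs: "consistent N k C m (\<lambda>_. 0) \<sigma>" unfolding \<sigma>_def by (rule signal_consistent[OF assms(1,2)])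
  have cs': "consistent N k C m' (\<lambda>_. 0) \<sigma>'" unfolding \<sigma>'_def by (rule signal_consistent[OF assms(1,2)])
  have "consistent N k C m r ?\<tau>"
    unfolding consistent_def
  proof (intro conjI allI ballI impI)
    fix e assume e: "e \<in> gedges N k"
    show "?\<tau> e = xor (enc C e m ?\<tau>) (r e)"
    proof (cases "e = Eb i")
      case True
      have ie: "in_edges N k (gtail N e) = {Ex i, Ey i, Ez' i}"
        using assms(3) True unfolding in_edges_def gedges_def by auto
      have "\<sigma> (Ex i) = \<sigma>' (Ex i)" "\<sigma> (Ey i) = \<sigma>' (Ey i)"
        unfolding \<sigma>_def \<sigma>'_def using AB_same[OF assms(1-4), of "Ex i"] AB_same[OF assms(1-4), of "Ey i"] by simp_all
      have "enc C e m ?\<tau> = enc C e m' \<sigma>'"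
      proof (rule enc_local[OF assms(2) e])
        show "\<forall>e'\<in>in_edges N k (gtail N e). ?\<tau> e' = \<sigma>' e'"
          using ie \<open>\<sigma> (Ex i) = \<sigma>' (Ex i)\<close> \<open>\<sigma> (Ey i) = \<sigma>' (Ey i)\<close> by simp
        show "gtail N e \<noteq> Src \<or> m = m'" using True by simp
      qed
      moreover have "\<sigma>' e = enc C e m' \<sigma>'" using cons_eq0[OF cs' e] .
      ultimately show ?thesis using True by (simp add: r_def)
    next
      case nb: False
      have agree: "\<forall>e'\<in>in_edges N k (gtail N e). ?\<tau> e' = \<sigma> e'"
      proof
        fix e' assume "e' \<in> in_edges N k (gtail N e)"
        hence "ghead N e' = gtail N e" unfolding in_edges_def by auto
        thus "?\<tau> e' = \<sigma> e'" using nb by (cases e) auto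
      qed
      hence encq: "enc C e m ?\<tau> = enc C e m \<sigma>" using enc_local[OF assms(2) e] by blast
      have se: "\<sigma> e = enc C e m \<sigma>" using cons_eq0[OF cs e] .
      show ?thesis
      proof (cases "e = Ez' i")
        case True
        have "?\<tau> e = \<sigma>' (Ez' i)" using True by simp
        also have "\<dots> = xor (\<sigma> e) (xor (\<sigma> (Ez' i)) (\<sigma>' (Ez' i)))" using True by (simp add: xor.assoc[symmetric])
        also have "\<dots> = xor (enc C e m ?\<tau>) (r e)" using True encq se by (simp add: r_def)
        finally show ?thesis .
      next
        case False
        have "?\<tau> e = \<sigma> e" using False nb by simp
        also have "\<dots> = xor (enc C e m ?\<tau>) (r e)" using False encq se by (simp add: r_def)
        finally show ?thesis .
      qed
    qed
  next
    fix e assume "e \<notin> gedges N k"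
    thus "?\<tau> e = 0" using cons_out[OF cs] Eb_in[OF assms(3)] Ez'_in[OF assms(3)]
      by (metis fun_upd_other)
  qed
  thus "signal N k C m r = ?\<tau>" by (rule signal_eq[OF assms(1,2)])
qed


lemma bvec_nth': "j < k \<Longrightarrow> bvec N k C m r ! j = signal N k C m r (Eb (Suc j))"
proof -
  assume j: "j < k"
  hence l: "j < length [1..<Suc k]" by auto
  have "[1..<Suc k] ! j = Suc j" using j by (simp add: nth_upt del: upt_Suc)
  thus ?thesis unfolding bvec_def using nth_map[OF l] by (simp del: upt_Suc)
qed

lemma swap_bvec:
  assumes "net_ok N" "is_code N k n C" "i \<in> {1..k}"
    and "signal N k C m (\<lambda>_. 0) (Ea i) = signal N k C m' (\<lambda>_. 0) (Ea i)"
  shows "\<exists>r. admissible N k n r \<and>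
     bvec N k C m r = (bvec N k C m (\<lambda>_. 0))[i - 1 := signal N k C m' (\<lambda>_. 0) (Eb i)]"
proof -
  obtain r where ad: "admissible N k n r" and sr: "signal N k C m r =
     (signal N k C m (\<lambda>_. 0))(Ez' i := signal N k C m' (\<lambda>_. 0) (Ez' i), Eb i := signal N k C m' (\<lambda>_. 0) (Eb i))"
    using swap[OF assms] by blast
  have "bvec N k C m r = (bvec N k C m (\<lambda>_. 0))[i - 1 := signal N k C m' (\<lambda>_. 0) (Eb i)]"
  proof (rule nth_equalityI)
    show "length (bvec N k C m r) = length ((bvec N k C m (\<lambda>_. 0))[i - 1 := signal N k C m' (\<lambda>_. 0) (Eb i)])"
      by (simp add: bvec_len)
  next
    fix j assume "j < length (bvec N k C m r)"
    hence j: "j < k" by (simp add: bvec_len)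
    show "bvec N k C m r ! j = (bvec N k C m (\<lambda>_. 0))[i - 1 := signal N k C m' (\<lambda>_. 0) (Eb i)] ! j"
    proof (cases "j = i - 1")
      case True
      hence "Suc j = i" using assms(3) by auto
      thus ?thesis using j True by (simp add: bvec_len bvec_nth' sr)
    next
      case False
      hence "Suc j \<noteq> i" using assms(3) by auto
      thus ?thesis using j False by (simp add: bvec_len bvec_nth' sr)
    qed
  qed
  thus ?thesis using ad by blast
qed

theorem lemma4:
  fixes N :: "('v, 'e) net" and C :: "'e code" and k n i ahat L :: nat and Ma :: "nat set"
  assumes "net_ok N"
    and "is_code N k n C"
    and "i \<in> {1..k}"
    and "ahat < 2^n"
    and "Ma = {m \<in> Mgood N k n C. signal N k C m (\<lambda>_. 0) (Ea i) = ahat}"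
    and "card ((\<lambda>m. signal N k C m (\<lambda>_. 0) (Eb i)) ` Ma) = L"
  shows "\<exists>X. X \<subseteq> Berr N k n C \<and> finite X \<and> card X = (L - 1) * card Ma \<and>
             (\<forall>v\<in>X. dec C v \<in> Ma)"
proof -
  define bf where "bf = (\<lambda>m. signal N k C m (\<lambda>_. 0) (Eb i))"
  define Bs where "Bs = bf ` Ma"
  define v where "v = (\<lambda>m b. (bvec N k C m (\<lambda>_. 0))[i - 1 := b])"
  define S where "S = (SIGMA m:Ma. Bs - {bf m})"
  define X where "X = (\<lambda>(m, b). v m b) ` S"
  have finMa: "finite Ma"
    using assms(5) unfolding Mgood_def messages_def by (auto intro: finite_subset)
  have finBs: "finite Bs" unfolding Bs_def using finMa by simp
  have cardBs: "card Bs = L" unfolding Bs_def bf_def using assms(6) .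
  have F1: "dec C (v m b) = m \<and> v m b \<in> tuples k n" if m: "m \<in> Ma" and b: "b \<in> Bs" for m b
  proof -
    obtain m' where m': "m' \<in> Ma" and bb: "b = bf m'" using b unfolding Bs_def by auto
    have ea: "signal N k C m (\<lambda>_. 0) (Ea i) = signal N k C m' (\<lambda>_. 0) (Ea i)"
      using m m' assms(5) by simp
    obtain r where ad: "admissible N k n r" and bv: "bvec N k C m r = v m b"
      using swap_bvec[OF assms(1-3) ea] unfolding v_def bb bf_def by blast
    have mg: "m \<in> Mgood N k n C" using m assms(5) by simp
    have "dec C (v m b) = m" using mg ad bv unfolding Mgood_def by force
    moreover have "v m b \<in> tuples k n"
    proof -
      have "\<forall>x\<in>set (bvec N k C m r). x < 2^n"
      proof
        fix x assume "x \<in> set (bvec N k C m r)"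
        then obtain j where "j \<in> set [1..<Suc k]" and x: "x = signal N k C m r (Eb j)"
          unfolding bvec_def by auto
        hence "j \<in> {1..k}" by auto
        thus "x < 2^n" using sig_bound[OF assms(1,2) ad Eb_in, of j m] x by simp
      qed
      moreover have "length (v m b) = k" using bv bvec_len by metis
      ultimately show ?thesis using bv unfolding tuples_def by simp
    qed
    ultimately show ?thesis by blast
  qed
  have nthv: "v m b ! (i - 1) = b" for m b
  proof -
    have "i - 1 < length (bvec N k C m (\<lambda>_. 0))" using assms(3) by (auto simp: bvec_len)
    thus ?thesis unfolding v_def by simp
  qed
  have inj: "inj_on (\<lambda>(m, b). v m b) S"
  proof (rule inj_onI)
    fix x y assume x: "x \<in> S" and y: "y \<in> S" and eq: "(\<lambda>(m, b). v m b) x = (\<lambda>(m, b). v m b) y"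
    obtain m1 b1 where x1: "x = (m1, b1)" "m1 \<in> Ma" "b1 \<in> Bs" using x unfolding S_def by auto
    obtain m2 b2 where y1: "y = (m2, b2)" "m2 \<in> Ma" "b2 \<in> Bs" using y unfolding S_def by auto
    have e: "v m1 b1 = v m2 b2" using eq x1 y1 by simp
    hence "m1 = m2" using F1[OF x1(2,3)] F1[OF y1(2,3)] by metis
    moreover have "b1 = b2" using e nthv by metis
    ultimately show "x = y" using x1 y1 by simp
  qed
  have sub: "X \<subseteq> Berr N k n C"
  proof
    fix w assume "w \<in> X"
    then obtain m b where mb: "m \<in> Ma" "b \<in> Bs" "b \<noteq> bf m" and w: "w = v m b"
      unfolding X_def S_def by auto
    have t: "w \<in> tuples k n" using F1[OF mb(1,2)] w by simp
    have "w \<notin> Bgood N k n C"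
    proof
      assume "w \<in> Bgood N k n C"
      then obtain m'' where m'': "m'' \<in> Mgood N k n C" and ww: "w = bvec N k C m'' (\<lambda>_. 0)"
        unfolding Bgood_def by auto
      have "dec C w = m''" using m'' adm0 ww unfolding Mgood_def by force
      moreover have "dec C w = m" using F1[OF mb(1,2)] w by simp
      ultimately have "m'' = m" by simp
      hence "w ! (i - 1) = bf m" using ww bvec_nth[OF assms(3)] unfolding bf_def by simp
      moreover have "w ! (i - 1) = b" using w nthv by simp
      ultimately show False using mb(3) by simp
    qed
    thus "w \<in> Berr N k n C" using t unfolding Berr_def by simp
  qed
  have finS: "finite S" unfolding S_def using finMa finBs by auto
  have "card X = card S" unfolding X_def using card_image[OF inj] .
  also have "\<dots> = (\<Sum>m\<in>Ma. card (Bs - {bf m}))" unfolding S_def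
    by (rule card_SigmaI[OF finMa]) (use finBs in auto)
  also have "\<dots> = (\<Sum>m\<in>Ma. L - 1)"
  proof (rule sum.cong)
    fix m assume "m \<in> Ma"
    hence "bf m \<in> Bs" unfolding Bs_def by simp
    thus "card (Bs - {bf m}) = L - 1" using cardBs finBs by simp
  qed simp
  also have "\<dots> = (L - 1) * card Ma" by simp
  finally have c: "card X = (L - 1) * card Ma" .
  have "\<forall>w\<in>X. dec C w \<in> Ma" unfolding X_def S_def using F1 by auto
  moreover have "finite X" unfolding X_def using finS by simp
  ultimately show ?thesis using sub c by blast
qed

end
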